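(* The operator $\nabla_\mu$ on $\mathcal A(X;\mathbb R^m)$ is compatible with $\mu$-a.e. equality in the following sense: if $u\in\mathcal A(X;\mathbb R^m)$ and $v\in\mathcal A(X;\mathbb R^m)$ satisfies $v(x)=u(x)$ for all $x\in\mathrm{supp}(\mu)$, then $\nabla_\mu u(x)=\nabla_\mu v(x)$ for $\mu$-a.a. $x\in X$.
   Context: Let $(X,d)$ be a separable compact metric space and $\mu$ a positive Radon measure on $X$; $\mathrm{supp}(\mu)$ is the smallest closed set $F$ with $\mu(X\setminus F)=0$. Let $\mathcal A(X)$ be a subalgebra of $C(X)$ containing $1$ and let $N\ge1$, $D:\mathcal A(X)\to L^\infty_\mu(X;\mathbb R^N)$ a linear operator. Let $m\ge1$, $\mathcal A(X;\mathbb R^m)=\mathcal A(X)^m$, $\mathbb M^{m\times N}$ the real $m\times N$ matrices with Euclidean inner product, $\nabla u$ the matrix with rows $Du_1,\dots,Du_m$. Let $\mathcal A^m_0=\{v\in\mathcal A(X;\mathbb R^m):v=0\text{ on }\mathrm{supp}(\mu)\}$, $\mathcal H^m_0=\{w\in L^\infty_\mu(X;\mathbb M^{m\times N}):w=\nabla v\ \mu\text{-a.e. for some }v\in\mathcal A^m_0\}$; for $\mu$-a.e. $x$, $N^m_\mu(x)=\{w(x):w\in\mathcal H^m_0\}$ (a linear subspace), $T^m_\mu(x)$ its orthogonal complement, $P^m_\mu(x)$ the orthogonal projection onto $T^m_\mu(x)$, and $\nabla_\mu u(x)=P^m_\mu(x)(\nabla u(x))$. *)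

theory Defs
  imports "HOL-Analysis.Analysis" "HOL-Probability.Probability"
begin

text \<open>The space X is the whole type 'a (a compact metric space).  Support of a Borel measure:
  the intersection of all closed sets whose complement is null (= the smallest such closed set).\<close>
definition msupp :: "'a::metric_space measure \<Rightarrow> 'a set" where
  "msupp \<mu> = \<Inter>{F. closed F \<and> emeasure \<mu> (UNIV - F) = 0}"

definition cont_subalgebra :: "('a::metric_space \<Rightarrow> real) set \<Rightarrow> bool" where
  "cont_subalgebra A \<longleftrightarrow>
     (\<forall>f\<in>A. continuous_on UNIV f) \<and> (\<lambda>x. 1) \<in> A \<and>
     (\<forall>f\<in>A. \<forall>g\<in>A. (\<lambda>x. f x + g x) \<in> A \<and> (\<lambda>x. f x * g x) \<in> A) \<and>
     (\<forall>f\<in>A. \<forall>c::real. (\<lambda>x. c * f x) \<in> A)"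

text \<open>D : A(X) \<rightarrow> L^\<infinity>_\<mu>(X;R^N), linear (as a map into L^\<infinity>, i.e. up to \<mu>-null sets).
  D u is a chosen representative of the class.\<close>
definition Linfty_linear_op ::
  "'a::metric_space measure \<Rightarrow> ('a \<Rightarrow> real) set \<Rightarrow> (('a \<Rightarrow> real) \<Rightarrow> 'a \<Rightarrow> real^'n) \<Rightarrow> bool" where
  "Linfty_linear_op \<mu> A D \<longleftrightarrow>
     (\<forall>u\<in>A. D u \<in> borel_measurable \<mu> \<and> (\<exists>C. AE x in \<mu>. norm (D u x) \<le> C)) \<and>
     (\<forall>u\<in>A. \<forall>v\<in>A. \<forall>a b::real.
        AE x in \<mu>. D (\<lambda>y. a * u y + b * v y) x = a *\<^sub>R D u x + b *\<^sub>R D v x)"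

definition vec_alg :: "('a \<Rightarrow> real) set \<Rightarrow> ('a \<Rightarrow> real^'m) set" where
  "vec_alg A = {u. \<forall>i. (\<lambda>x. u x $ i) \<in> A}"

definition grad :: "(('a \<Rightarrow> real) \<Rightarrow> 'a \<Rightarrow> real^'n) \<Rightarrow> ('a \<Rightarrow> real^'m) \<Rightarrow> 'a \<Rightarrow> real^'n^'m" where
  "grad D u x = (\<chi> i. D (\<lambda>y. u y $ i) x)"

definition vanish_alg :: "'a::metric_space measure \<Rightarrow> ('a \<Rightarrow> real) set \<Rightarrow> ('a \<Rightarrow> real^'m) set" where
  "vanish_alg \<mu> A = {v \<in> vec_alg A. \<forall>x\<in>msupp \<mu>. v x = 0}"

definition normal_space ::
  "'a::metric_space measure \<Rightarrow> ('a \<Rightarrow> real) set \<Rightarrow> (('a \<Rightarrow> real) \<Rightarrow> 'a \<Rightarrow> real^'n) \<Rightarrow> 'a \<Rightarrow> (real^'n^'m) set" where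
  "normal_space \<mu> A D x = {grad D v x | v. v \<in> vanish_alg \<mu> A}"

definition tangent_space ::
  "'a::metric_space measure \<Rightarrow> ('a \<Rightarrow> real) set \<Rightarrow> (('a \<Rightarrow> real) \<Rightarrow> 'a \<Rightarrow> real^'n) \<Rightarrow> 'a \<Rightarrow> (real^'n^'m) set" where
  "tangent_space \<mu> A D x = {w. \<forall>z\<in>normal_space \<mu> A D x. z \<bullet> w = 0}"

definition orth_proj :: "'b::real_inner set \<Rightarrow> 'b \<Rightarrow> 'b" where
  "orth_proj S w = (THE p. p \<in> S \<and> (\<forall>y\<in>S. (w - p) \<bullet> y = 0))"

definition grad_mu ::
  "'a::metric_space measure \<Rightarrow> ('a \<Rightarrow> real) set \<Rightarrow> (('a \<Rightarrow> real) \<Rightarrow> 'a \<Rightarrow> real^'n) \<Rightarrow> ('a \<Rightarrow> real^'m) \<Rightarrow> 'a \<Rightarrow> real^'n^'m" where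
  "grad_mu \<mu> A D u x = orth_proj (tangent_space \<mu> A D x) (grad D u x)"

end

theory Submission
  imports Defs
begin

lemma tangent_subspace: "subspace (tangent_space \<mu> A D x)"
  unfolding subspace_def tangent_space_def
  by (auto simp: inner_add_right inner_scaleR_right)

lemma orth_proj_shift:
  fixes S :: "'b::euclidean_space set"
  assumes S: "subspace S" and n: "\<forall>y\<in>S. n \<bullet> y = 0"
  shows "orth_proj S (g + n) = orth_proj S g"
proof -
  obtain p z where p: "p \<in> span S" and z: "\<forall>w\<in>span S. orthogonal z w" and g: "g = p + z"
    using orthogonal_subspace_decomp_exists[of S g] by metis
  have pS: "p \<in> S" using p S real_vector.span_eq_iff by blast
  have P1: "p \<in> S \<and> (\<forall>y\<in>S. (g - p) \<bullet> y = 0)"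
    using pS z g by (auto simp: orthogonal_def span_base)
  have P2: "p \<in> S \<and> (\<forall>y\<in>S. (g + n - p) \<bullet> y = 0)"
    using P1 n by (auto simp: inner_add_left inner_diff_left)
  have uniq: "q = p" if "q \<in> S \<and> (\<forall>y\<in>S. (h - q) \<bullet> y = 0)"
    "p \<in> S \<and> (\<forall>y\<in>S. (h - p) \<bullet> y = 0)" for q h
  proof -
    have d: "q - p \<in> S" using that S by (simp add: subspace_diff)
    have "(h - p) \<bullet> (q - p) - (h - q) \<bullet> (q - p) = 0" using that d by auto
    then have "(q - p) \<bullet> (q - p) = 0" by (simp add: algebra_simps)
    then show ?thesis by simp
  qed
  have "orth_proj S g = p"
    unfolding orth_proj_def by (rule the_equality[where P="\<lambda>p. p \<in> S \<and> (\<forall>y\<in>S. (g - p) \<bullet> y = 0)", OF P1]) (use uniq P1 in blast)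
  moreover have "orth_proj S (g + n) = p"
    unfolding orth_proj_def by (rule the_equality[where P="\<lambda>p. p \<in> S \<and> (\<forall>y\<in>S. (g + n - p) \<bullet> y = 0)", OF P2]) (use uniq P2 in blast)
  ultimately show ?thesis by simp
qed

theorem mainTheorem6:
  fixes \<mu> :: "'a::metric_space measure"
    and A :: "('a \<Rightarrow> real) set"
    and D :: "('a \<Rightarrow> real) \<Rightarrow> 'a \<Rightarrow> real^'n"
    and u v :: "'a \<Rightarrow> real^'m"
  assumes "compact (UNIV :: 'a set)"
    and "sets \<mu> = sets borel"
    and "finite_measure \<mu>"
    and "cont_subalgebra A"
    and "Linfty_linear_op \<mu> A D"
    and "u \<in> vec_alg A"
    and "v \<in> vec_alg A"
    and "\<forall>x\<in>msupp \<mu>. v x = u x"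
  shows "AE x in \<mu>. grad_mu \<mu> A D u x = grad_mu \<mu> A D v x"
proof -
  define w where "w = (\<lambda>x. v x - u x)"
  have wi: "(\<lambda>y. w y $ i) \<in> A" for i
  proof -
    have a1: "(\<lambda>y. v y $ i) \<in> A" and a2: "(\<lambda>y. u y $ i) \<in> A" using assms(6,7) by (auto simp: vec_alg_def)
    have h: "\<forall>f\<in>A. \<forall>g\<in>A. (\<lambda>x. f x + g x) \<in> A \<and> (\<lambda>x. f x * g x) \<in> A"
      and h2: "\<forall>f\<in>A. \<forall>c::real. (\<lambda>x. c * f x) \<in> A" using assms(4) unfolding cont_subalgebra_def by blast+
    have b: "(\<lambda>x. (-1) * u x $ i) \<in> A" by (rule bspec[OF h2 a2, THEN spec[of _ "-1"]])
    have "(\<lambda>x. v x $ i + (-1) * u x $ i) \<in> A" by (rule bspec[OF bspec[OF h a1] b, THEN conjunct1])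
    then show ?thesis by (simp add: w_def)
  qed
  have wv: "w \<in> vanish_alg \<mu> A" using wi assms(8) by (auto simp: vanish_alg_def vec_alg_def w_def)
  have "AE x in \<mu>. \<forall>i\<in>UNIV. D (\<lambda>y. v y $ i) x = D (\<lambda>y. u y $ i) x + D (\<lambda>y. w y $ i) x"
  proof (rule AE_finite_allI, simp)
    fix i :: 'm
    have ui: "(\<lambda>y. u y $ i) \<in> A" using assms(6) by (auto simp: vec_alg_def)
    have "AE x in \<mu>. D (\<lambda>y. 1 * u y $ i + 1 * w y $ i) x = 1 *\<^sub>R D (\<lambda>y. u y $ i) x + 1 *\<^sub>R D (\<lambda>y. w y $ i) x"
    proof -
      have L: "\<forall>u\<in>A. \<forall>v\<in>A. \<forall>a b::real. AE x in \<mu>. D (\<lambda>y. a * u y + b * v y) x = a *\<^sub>R D u x + b *\<^sub>R D v x"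
        using assms(5) unfolding Linfty_linear_op_def by blast
      show ?thesis by (rule bspec[OF bspec[OF L ui] wi[of i], THEN spec[of _ 1], THEN spec[of _ 1]])
    qed
    moreover have "(\<lambda>y. 1 * u y $ i + 1 * w y $ i) = (\<lambda>y. v y $ i)" by (auto simp: w_def)
    ultimately show "AE x in \<mu>. D (\<lambda>y. v y $ i) x = D (\<lambda>y. u y $ i) x + D (\<lambda>y. w y $ i) x" by simp
  qed
  then show ?thesis
  proof (rule AE_mp, intro AE_I2 impI)
    fix x assume h: "\<forall>i\<in>UNIV. D (\<lambda>y. v y $ i) x = D (\<lambda>y. u y $ i) x + D (\<lambda>y. w y $ i) x"
    have gv: "grad D v x = grad D u x + grad D w x"
      using h by (simp add: grad_def vec_eq_iff)
    have nN: "grad D w x \<in> normal_space \<mu> A D x" using wv by (auto simp: normal_space_def)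
    have "\<forall>y\<in>tangent_space \<mu> A D x. grad D w x \<bullet> y = 0"
      using nN by (auto simp: tangent_space_def)
    then show "grad_mu \<mu> A D u x = grad_mu \<mu> A D v x"
      unfolding grad_mu_def gv using orth_proj_shift[OF tangent_subspace] by metis
  qed
qed

end
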